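(* Let $\Omega\subset\mathbb R^n$ be a bounded domain, $\alpha<0$, and $\varphi:\partial\Omega\to\mathbb R$ a positive function. If $u$ is a positive solution of $$\mathrm{div}\left(\frac{Du}{\sqrt{1-|Du|^2}}\right)=\frac{\alpha}{u\sqrt{1-|Du|^2}}\ \text{ in }\Omega,\qquad u=\varphi\ \text{ on }\partial\Omega,\qquad |Du|<1\ \text{ in }\overline\Omega,$$ then there exists a constant $C_1=C_1(\alpha,\Omega,\varphi)>0$, depending only on $\alpha$, $\Omega$ and $\varphi$, such that $$\min_{\partial\Omega}\varphi\le u\le C_1\quad\text{in }\Omega.$$ *)

theory Defs
  imports "HOL-Analysis.Analysis"
begin

definition divergence :: "('a::euclidean_space \<Rightarrow> 'a) \<Rightarrow> 'a \<Rightarrow> real" where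
  "divergence V x = (\<Sum>i\<in>Basis. (frechet_derivative V (at x) i) \<bullet> i)"

definition bounded_domain :: "'a::euclidean_space set \<Rightarrow> bool" where
  "bounded_domain \<Omega> \<longleftrightarrow> open \<Omega> \<and> connected \<Omega> \<and> bounded \<Omega> \<and> \<Omega> \<noteq> {}"

definition is_solution :: "real \<Rightarrow> 'a::euclidean_space set \<Rightarrow> ('a \<Rightarrow> real) \<Rightarrow> ('a \<Rightarrow> real) \<Rightarrow> bool" where
  "is_solution \<alpha> \<Omega> \<phi> u \<longleftrightarrow>
    (\<exists>Du D2u.
      continuous_on (closure \<Omega>) u \<and>
      continuous_on (closure \<Omega>) Du \<and>
      (\<forall>x\<in>\<Omega>. (u has_derivative (\<lambda>h. Du x \<bullet> h)) (at x)) \<and>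
      (\<forall>x\<in>\<Omega>. (Du has_derivative D2u x) (at x)) \<and>
      (\<forall>i\<in>Basis. continuous_on \<Omega> (\<lambda>x. D2u x i)) \<and>
      (\<forall>x\<in>closure \<Omega>. norm (Du x) < 1) \<and>
      (\<forall>x\<in>\<Omega>. divergence (\<lambda>y. (1 / sqrt (1 - (norm (Du y))\<^sup>2)) *\<^sub>R Du y) x
                 = \<alpha> / (u x * sqrt (1 - (norm (Du x))\<^sup>2))) \<and>
      (\<forall>x\<in>frontier \<Omega>. u x = \<phi> x))"

end

theory Submission imports Defs begin
lemma frontier_sub_closure: "frontier S \<subseteq> closure S"
  by (auto simp: frontier_def)

lemma c_diff:
  fixes Du :: "'a::euclidean_space \<Rightarrow> 'a"
  assumes "(Du has_derivative D) (at x0)" "norm (Du x0) < 1"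
  shows "(\<lambda>y. 1 / sqrt (1 - (norm (Du y))\<^sup>2)) differentiable (at x0)"
proof -
  have e: "(\<lambda>y. 1 / sqrt (1 - (norm (Du y))\<^sup>2)) = (\<lambda>y. inverse (sqrt (1 - Du y \<bullet> Du y)))"
    by (simp add: power2_norm_eq_inner divide_inverse)
  have pos: "0 < 1 - Du x0 \<bullet> Du x0" using assms(2)
    by (metis abs_norm_cancel abs_square_less_1 diff_gt_0_iff_gt power2_norm_eq_inner)
  have dd: "Du differentiable (at x0)" using assms(1) by (auto simp: differentiable_def)
  have d1: "(\<lambda>y. 1 - Du y \<bullet> Du y) differentiable (at x0)"
    by (intro differentiable_diff differentiable_const differentiable_inner dd)
  have d2: "(\<lambda>t. inverse (sqrt t)) differentiable (at (1 - Du x0 \<bullet> Du x0))"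
    using pos unfolding differentiable_def
    by (auto intro!: derivative_eq_intros exI simp: has_field_derivative_def[symmetric])
  show ?thesis unfolding e
    using differentiable_compose[OF d2 d1] by (simp add: o_def)
qed

lemma second_order:
  fixes u :: "'a::euclidean_space \<Rightarrow> real"
  assumes S: "open S" "x0 \<in> S"
    and du: "\<forall>x\<in>S. (u has_derivative (\<lambda>h. Du x \<bullet> h)) (at x)"
    and d2: "(Du has_derivative D) (at x0)"
    and mn: "\<forall>w\<in>S. u x0 \<le> u w"
  shows "Du x0 \<bullet> v = 0 \<and> D v \<bullet> v \<ge> 0"
proof (cases "v = 0")
  case True
  have "linear D" using d2 has_derivative_linear by blast
  then show ?thesis using True linear_0 by auto
next
  case False
  obtain e where e: "e > 0" "ball x0 e \<subseteq> S" using S open_contains_ball by blast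
  define d where "d = e / norm v"
  have dpos: "d > 0" using e False by (simp add: d_def)
  have inS: "x0 + t *\<^sub>R v \<in> S" if "\<bar>t\<bar> < d" for t
  proof -
    have "norm (t *\<^sub>R v) < e" using that False by (simp add: d_def field_simps)
    then show ?thesis using e(2) by (auto simp: dist_norm)
  qed
  define f where "f t = u (x0 + t *\<^sub>R v)" for t
  define g where "g t = Du (x0 + t *\<^sub>R v) \<bullet> v" for t
  have fder: "(f has_real_derivative g t) (at t)" if "\<bar>t\<bar> < d" for t
  proof -
    have l: "((\<lambda>t. x0 + t *\<^sub>R v) has_derivative (\<lambda>h. h *\<^sub>R v)) (at t)"
      by (auto intro!: derivative_eq_intros)
    have "((\<lambda>t. u (x0 + t *\<^sub>R v)) has_derivative (\<lambda>h. Du (x0 + t *\<^sub>R v) \<bullet> (h *\<^sub>R v))) (at t)"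
      using has_derivative_compose[OF l] du inS[OF that] by blast
    moreover have "(\<lambda>h. Du (x0 + t *\<^sub>R v) \<bullet> (h *\<^sub>R v)) = (*) (g t)"
      by (auto simp: g_def)
    ultimately show ?thesis unfolding has_field_derivative_def f_def by simp
  qed
  have g0: "g 0 = 0"
  proof -
    have "f 0 \<le> f y" if "\<bar>0 - y\<bar> < d" for y using mn inS that by (simp add: f_def)
    then show ?thesis using DERIV_local_min[OF fder[of 0] dpos] dpos by auto
  qed
  have gder: "(g has_real_derivative (D v \<bullet> v)) (at 0)"
  proof -
    have l: "((\<lambda>t. x0 + t *\<^sub>R v) has_derivative (\<lambda>h. h *\<^sub>R v)) (at 0)"
      by (auto intro!: derivative_eq_intros)
    have "((\<lambda>t. Du (x0 + t *\<^sub>R v)) has_derivative (\<lambda>h. D (h *\<^sub>R v))) (at 0)"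
      using has_derivative_compose[OF l] d2 by simp
    then have "((\<lambda>t. Du (x0 + t *\<^sub>R v) \<bullet> v) has_derivative (\<lambda>h. D (h *\<^sub>R v) \<bullet> v)) (at 0)"
      by (rule has_derivative_inner_left)
    moreover have "linear D" using d2 has_derivative_linear by blast
    moreover have "(\<lambda>h. D (h *\<^sub>R v) \<bullet> v) = (*) (D v \<bullet> v)"
      using calculation(2) by (auto simp: linear_scale)
    ultimately show ?thesis unfolding has_field_derivative_def g_def by simp
  qed
  have "D v \<bullet> v \<ge> 0"
  proof (rule ccontr)
    assume "\<not> ?thesis"
    then have "D v \<bullet> v < 0" by simp
    from DERIV_neg_dec_right[OF gder this] obtain d2 where d2: "d2 > 0" "\<forall>h>0. h < d2 \<longrightarrow> g (0 + h) < g 0" by blast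
    define t where "t = min d d2 / 2"
    have t: "t > 0" "t < d" "t < d2" using dpos d2 by (auto simp: t_def)
    have "f t < f 0"
    proof (rule DERIV_neg_imp_decreasing_open[OF t(1)])
      fix x assume "0 < x" "x < t"
      then show "\<exists>y. (f has_real_derivative y) (at x) \<and> y < 0"
        using fder[of x] d2(2) g0 t by auto
    next
      show "continuous_on {0..t} f"
      proof (intro continuous_at_imp_continuous_on ballI)
        fix x assume "x \<in> {0..t}"
        then have "\<bar>x\<bar> < d" using t by auto
        then show "isCont f x" using fder DERIV_isCont by blast
      qed
    qed
    moreover have "f 0 \<le> f t" using mn inS t by (simp add: f_def)
    ultimately show False by simp
  qed
  then show ?thesis using g0 by (simp add: g_def)
qed

lemma no_interior_min:
  fixes u :: "'a::euclidean_space \<Rightarrow> real"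
  assumes S: "open S" "x0 \<in> S"
    and du: "\<forall>x\<in>S. (u has_derivative (\<lambda>h. Du x \<bullet> h)) (at x)"
    and d2: "\<forall>x\<in>S. (Du has_derivative D2u x) (at x)"
    and nb: "norm (Du x0) < 1"
    and mn: "\<forall>w\<in>S. u x0 \<le> u w"
    and up: "u x0 > 0" and al: "\<alpha> < 0"
    and eq: "divergence (\<lambda>y. (1 / sqrt (1 - (norm (Du y))\<^sup>2)) *\<^sub>R Du y) x0
                 = \<alpha> / (u x0 * sqrt (1 - (norm (Du x0))\<^sup>2))"
  shows False
proof -
  have d2x: "(Du has_derivative D2u x0) (at x0)" using d2 S by blast
  have so: "\<And>v. Du x0 \<bullet> v = 0 \<and> D2u x0 v \<bullet> v \<ge> 0"
    using second_order[OF S du d2x mn] by blast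
  have Du0: "Du x0 = 0" using so[of "Du x0"] by simp
  define c where "c y = 1 / sqrt (1 - (norm (Du y))\<^sup>2)" for y
  have "c differentiable (at x0)" unfolding c_def using c_diff[OF d2x nb] by simp
  then obtain c' where c': "(c has_derivative c') (at x0)" by (auto simp: differentiable_def)
  have "((\<lambda>y. c y *\<^sub>R Du y) has_derivative (\<lambda>h. c x0 *\<^sub>R D2u x0 h + c' h *\<^sub>R Du x0)) (at x0)"
    by (rule has_derivative_scaleR[OF c' d2x])
  moreover have "c x0 = 1" using Du0 by (simp add: c_def)
  ultimately have "((\<lambda>y. c y *\<^sub>R Du y) has_derivative D2u x0) (at x0)"
    using Du0 by simp
  then have fd: "frechet_derivative (\<lambda>y. c y *\<^sub>R Du y) (at x0) = D2u x0"
    using frechet_derivative_at by metis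
  have "divergence (\<lambda>y. c y *\<^sub>R Du y) x0 \<ge> 0"
    unfolding divergence_def fd using so by (intro sum_nonneg) auto
  moreover have "\<alpha> / (u x0 * sqrt (1 - (norm (Du x0))\<^sup>2)) < 0"
    using Du0 up al by (simp add: divide_neg_pos)
  ultimately show False using eq unfolding c_def by simp
qed


lemma upper_seg:
  fixes u :: "'a::euclidean_space \<Rightarrow> real"
  assumes op: "open S" and bd: "bounded S" and x: "x \<in> S"
    and uc: "continuous_on (closure S) u"
    and du: "\<forall>x\<in>S. (u has_derivative (\<lambda>h. Du x \<bullet> h)) (at x)"
    and nb: "\<forall>x\<in>S. norm (Du x) \<le> 1"
  shows "\<exists>y\<in>frontier S. u x \<le> u y + norm (y - x)"
proof -
  obtain z where z: "z \<notin> closure S"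
  proof -
    have "closure S \<noteq> UNIV" using bounded_closure[OF bd] not_bounded_UNIV by metis
    then show ?thesis using that by blast
  qed
  have zS: "z \<notin> S" using z closure_subset by blast
  have ne: "closed_segment x z \<inter> frontier S \<noteq> {}"
    apply (rule connected_Int_frontier)
    using x zS by auto
  have cl: "closed (closed_segment x z \<inter> frontier S)"
    by (intro closed_Int closed_segment frontier_closed)
  obtain y where y: "y \<in> closed_segment x z \<inter> frontier S"
    and ymin0: "\<And>w. w \<in> closed_segment x z \<inter> frontier S \<Longrightarrow> dist x y \<le> dist x w"
    using distance_attains_inf[OF cl ne, of x] by metis
  have ymin: "\<forall>w\<in>closed_segment x z \<inter> frontier S. dist x y \<le> dist x w"
    using ymin0 by blast
  have yF: "y \<in> frontier S" using y by blast
  have yx: "y \<noteq> x" using yF x op by (auto simp: frontier_def interior_open)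
  define p where "p t = x + t *\<^sub>R (y - x)" for t
  have pseg: "p t \<in> closed_segment x z" if "t \<in> {0..1}" for t
  proof -
    have "closed_segment x y \<subseteq> closed_segment x z"
      using y by (intro closed_segment_subset) (auto simp: convex_closed_segment)
    moreover have "p t \<in> closed_segment x y"
      using that unfolding closed_segment_def p_def
      by (auto intro!: exI[of _ t] simp: algebra_simps)
    ultimately show ?thesis by blast
  qed
  have pdist: "dist x (p t) < dist x y" if "t \<in> {0..<1}" for t
    using that yx by (auto simp: p_def dist_norm norm_minus_commute)
  have A: "p ` {0..<1} \<subseteq> S"
  proof (rule ccontr)
    assume "\<not> ?thesis"
    then have "p ` {0..<1} - S \<noteq> {}" by blast
    moreover have "p ` {0..<1} \<inter> S \<noteq> {}"
    proof -
      have "x \<in> p ` {0..<1}" by (rule image_eqI[where x=0]) (auto simp: p_def)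
      then show ?thesis using x by blast
    qed
    moreover have "connected (p ` {0..<1})"
      unfolding p_def by (intro connected_continuous_image connected_Ico)
        (auto intro!: continuous_intros)
    ultimately have "p ` {0..<1} \<inter> frontier S \<noteq> {}"
      using connected_Int_frontier by blast
    then obtain t where t: "t \<in> {0..<1}" "p t \<in> frontier S" by blast
    then have "p t \<in> closed_segment x z" using pseg by auto
    then have "dist x y \<le> dist x (p t)" using ymin t by blast
    then show False using pdist[OF t(1)] by simp
  qed
  have p1: "p 1 = y" by (simp add: p_def)
  have p0: "p 0 = x" by (simp add: p_def)
  have pcl: "p ` {0..1} \<subseteq> closure S"
  proof
    fix w assume "w \<in> p ` {0..1}"
    then obtain t where t: "t \<in> {0..1}" "w = p t" by blast
    show "w \<in> closure S"
    proof (cases "t = 1")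
      case True then show ?thesis using t p1 yF frontier_sub_closure by auto
    next
      case False
      then have "t \<in> {0..<1}" using t by auto
      then have "p t \<in> S" using A by blast
      then show ?thesis using t closure_subset by blast
    qed
  qed
  define g where "g t = u (p t)" for t
  have gc: "continuous_on {0..1} g"
    unfolding g_def
    by (rule continuous_on_compose2[OF uc _ pcl]) (auto simp: p_def intro!: continuous_intros)
  have gder: "(g has_real_derivative (Du (p t) \<bullet> (y - x))) (at t)" if "t \<in> {0<..<1}" for t
  proof -
    have l: "(p has_derivative (\<lambda>h. h *\<^sub>R (y - x))) (at t)"
      unfolding p_def by (auto intro!: derivative_eq_intros)
    have "p t \<in> S" using A that by auto
    then have "((\<lambda>t. u (p t)) has_derivative (\<lambda>h. Du (p t) \<bullet> (h *\<^sub>R (y - x)))) (at t)"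
      using has_derivative_compose[OF l] du by blast
    moreover have "(\<lambda>h. Du (p t) \<bullet> (h *\<^sub>R (y - x))) = (*) (Du (p t) \<bullet> (y - x))"
      by auto
    ultimately show ?thesis unfolding has_field_derivative_def g_def by simp
  qed
  obtain l t where lt: "0 < t" "t < 1" "(g has_real_derivative l) (at t)" "g 1 - g 0 = (1 - 0) * l"
    using MVT[of 0 1 g] gc gder by (auto simp: real_differentiable_def)
  have "t \<in> {0<..<1}" using lt by auto
  from DERIV_unique[OF lt(3) gder[OF this]] have "l = Du (p t) \<bullet> (y - x)" .
  moreover have "p t \<in> S" using A lt by auto
  ultimately have "\<bar>l\<bar> \<le> norm (y - x)"
  proof -
    have "\<bar>Du (p t) \<bullet> (y - x)\<bar> \<le> norm (Du (p t)) * norm (y - x)"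
      by (rule Cauchy_Schwarz_ineq2)
    also have "\<dots> \<le> 1 * norm (y - x)"
      using nb \<open>p t \<in> S\<close> by (intro mult_right_mono) auto
    finally show ?thesis using \<open>l = _\<close> by simp
  qed
  then have "u x \<le> u y + norm (y - x)" using lt p0 p1 by (simp add: g_def)
  then show ?thesis using yF by blast
qed


theorem proposition4p6:
  fixes \<Omega> :: "'a::euclidean_space set" and \<alpha> :: real and \<phi> :: "'a \<Rightarrow> real"
  assumes "bounded_domain \<Omega>"
    and "\<alpha> < 0"
    and "\<forall>x\<in>frontier \<Omega>. \<phi> x > 0"
  shows "\<exists>C1>0. \<forall>u. ((\<forall>x\<in>\<Omega>. u x > 0) \<and> is_solution \<alpha> \<Omega> \<phi> u) \<longrightarrow>
           (\<forall>x\<in>\<Omega>. Inf (\<phi> ` frontier \<Omega>) \<le> u x \<and> u x \<le> C1)"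
proof -
  have op: "open \<Omega>" and bd: "bounded \<Omega>" using assms(1) by (auto simp: bounded_domain_def)
  have cpt: "compact (closure \<Omega>)" using bd by (simp add: compact_closure)
  have bb: "bdd_below (\<phi> ` frontier \<Omega>)" using assms(3) by (intro bdd_belowI2[where m=0]) auto
  have lower: "Inf (\<phi> ` frontier \<Omega>) \<le> u x"
    if up: "\<forall>x\<in>\<Omega>. u x > 0" and sol: "is_solution \<alpha> \<Omega> \<phi> u" and x: "x \<in> \<Omega>" for u x
  proof -
    obtain Du D2u where all:
      "continuous_on (closure \<Omega>) u \<and>
      continuous_on (closure \<Omega>) Du \<and>
      (\<forall>x\<in>\<Omega>. (u has_derivative (\<lambda>h. Du x \<bullet> h)) (at x)) \<and>
      (\<forall>x\<in>\<Omega>. (Du has_derivative D2u x) (at x)) \<and>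
      (\<forall>i\<in>Basis. continuous_on \<Omega> (\<lambda>x. D2u x i)) \<and>
      (\<forall>x\<in>closure \<Omega>. norm (Du x) < 1) \<and>
      (\<forall>x\<in>\<Omega>. divergence (\<lambda>y. (1 / sqrt (1 - (norm (Du y))\<^sup>2)) *\<^sub>R Du y) x
                 = \<alpha> / (u x * sqrt (1 - (norm (Du x))\<^sup>2))) \<and>
      (\<forall>x\<in>frontier \<Omega>. u x = \<phi> x)"
      using sol unfolding is_solution_def by (elim exE) (rule that)
    from all have uc: "continuous_on (closure \<Omega>) u" by (elim conjE)
    from all have du: "\<forall>x\<in>\<Omega>. (u has_derivative (\<lambda>h. Du x \<bullet> h)) (at x)" by (elim conjE)
    from all have d2: "\<forall>x\<in>\<Omega>. (Du has_derivative D2u x) (at x)" by (elim conjE)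
    from all have nb: "\<forall>x\<in>closure \<Omega>. norm (Du x) < 1" by (elim conjE)
    from all have eq: "\<forall>x\<in>\<Omega>. divergence (\<lambda>y. (1 / sqrt (1 - (norm (Du y))\<^sup>2)) *\<^sub>R Du y) x
                 = \<alpha> / (u x * sqrt (1 - (norm (Du x))\<^sup>2))" by (elim conjE)
    from all have bc: "\<forall>x\<in>frontier \<Omega>. u x = \<phi> x" by (elim conjE)
    have "closure \<Omega> \<noteq> {}" using x closure_subset by blast
    then obtain x0 where x0: "x0 \<in> closure \<Omega>" and mn: "\<forall>y\<in>closure \<Omega>. u x0 \<le> u y"
      using continuous_attains_inf[OF cpt _ uc] by blast
    have xc: "x \<in> closure \<Omega>" using x closure_subset by blast
    show ?thesis
    proof (cases "x0 \<in> \<Omega>")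
      case True
      have nb0: "norm (Du x0) < 1" by (rule bspec[OF nb x0])
      have mn': "\<forall>w\<in>\<Omega>. u x0 \<le> u w"
      proof
        fix w assume "w \<in> \<Omega>"
        then have "w \<in> closure \<Omega>" using closure_subset by blast
        then show "u x0 \<le> u w" using mn by blast
      qed
      have up0: "u x0 > 0" by (rule bspec[OF up True])
      have eq0: "divergence (\<lambda>y. (1 / sqrt (1 - (norm (Du y))\<^sup>2)) *\<^sub>R Du y) x0
                 = \<alpha> / (u x0 * sqrt (1 - (norm (Du x0))\<^sup>2))" by (rule bspec[OF eq True])
      have "False"
        by (rule no_interior_min[OF op True du d2 nb0 mn' up0 assms(2) eq0])
      then show ?thesis by (rule FalseE)
    next
      case False
      then have f: "x0 \<in> frontier \<Omega>" using x0 op by (simp add: frontier_def interior_open)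
      have "Inf (\<phi> ` frontier \<Omega>) \<le> \<phi> x0" using f bb by (intro cInf_lower) auto
      also have "\<dots> = u x0" using bc f by simp
      also have "\<dots> \<le> u x" using mn xc by blast
      finally show ?thesis .
    qed
  qed
  show ?thesis
  proof (cases "bdd_above (\<phi> ` frontier \<Omega>)")
    case True
    then obtain M where M: "\<forall>y\<in>frontier \<Omega>. \<phi> y \<le> M" by (auto simp: bdd_above_def)
    obtain B where B: "\<forall>x\<in>closure \<Omega>. norm x \<le> B"
      using bounded_closure[OF bd] by (auto simp: bounded_iff)
    show ?thesis
    proof (intro exI[of _ "max 1 (M + 2 * B)"] conjI allI impI ballI)
      fix u x assume h: "(\<forall>x\<in>\<Omega>. u x > 0) \<and> is_solution \<alpha> \<Omega> \<phi> u" and x: "x \<in> \<Omega>"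
      then show "Inf (\<phi> ` frontier \<Omega>) \<le> u x" using lower[of u x] h x by blast
      obtain Du D2u where
        uc: "continuous_on (closure \<Omega>) u" and
        du: "\<forall>x\<in>\<Omega>. (u has_derivative (\<lambda>h. Du x \<bullet> h)) (at x)" and
        nb: "\<forall>x\<in>closure \<Omega>. norm (Du x) < 1" and
        bc: "\<forall>x\<in>frontier \<Omega>. u x = \<phi> x"
        using h unfolding is_solution_def by (elim exE conjE) (rule that, assumption+)
      have nb': "\<forall>x\<in>\<Omega>. norm (Du x) \<le> 1"
      proof
        fix z assume "z \<in> \<Omega>"
        then have "z \<in> closure \<Omega>" using closure_subset by blast
        then show "norm (Du z) \<le> 1" using nb less_imp_le by blast
      qed
      obtain y where y: "y \<in> frontier \<Omega>" "u x \<le> u y + norm (y - x)"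
        using upper_seg[OF op bd x uc du nb'] by blast
      have "norm (y - x) \<le> norm y + norm x" by (rule norm_triangle_ineq4)
      also have "\<dots> \<le> B + B"
      proof -
        have "y \<in> closure \<Omega>" using y(1) frontier_sub_closure by blast
        moreover have "x \<in> closure \<Omega>" using x closure_subset by blast
        ultimately show ?thesis using B by (intro add_mono) auto
      qed
      finally have "norm (y - x) \<le> 2 * B" by simp
      moreover have "u y \<le> M" using bc M y(1) by simp
      ultimately show "u x \<le> max 1 (M + 2 * B)" using y(2) by linarith
    qed simp
  next
    case False
    have nosol: "\<not> is_solution \<alpha> \<Omega> \<phi> u" for u
    proof
      assume "is_solution \<alpha> \<Omega> \<phi> u"
      then have uc: "continuous_on (closure \<Omega>) u"
        unfolding is_solution_def by (elim exE conjE) assumption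
      from \<open>is_solution \<alpha> \<Omega> \<phi> u\<close> have bc: "\<forall>x\<in>frontier \<Omega>. u x = \<phi> x"
        unfolding is_solution_def by (elim exE conjE) assumption
      have "bounded (u ` closure \<Omega>)"
        using compact_continuous_image[OF uc cpt] compact_imp_bounded by blast
      then obtain K where K: "\<forall>x\<in>closure \<Omega>. norm (u x) \<le> K" by (auto simp: bounded_iff)
      have "bdd_above (\<phi> ` frontier \<Omega>)"
      proof (intro bdd_aboveI2[where M=K])
        fix y assume "y \<in> frontier \<Omega>"
        moreover from this have "y \<in> closure \<Omega>" using frontier_sub_closure by blast
        ultimately have "\<bar>u y\<bar> \<le> K" "u y = \<phi> y" using K bc by auto
        then show "\<phi> y \<le> K" by simp
      qed
      then show False using False by blast
    qed
    show ?thesis using nosol by (intro exI[of _ 1]) auto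
  qed
qed

end
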